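(* Assume (A1)–(A4). Then there exist $q>0$, $K>0$, $\delta>0$ and $b>0$ such that, with $V(x)=W(x)=1+qx^2$ and $C=[-K,K]$, $$\log\big(e^{-V}Pe^{V}\big)(x)\le-\delta W(x)+b\mathbf{1}_C(x)\quad\text{for all }x\in\mathbb{R},$$ where $Pe^V(x)=\mathbb{E}\,e^{V(x+\mu(x)+\sigma(x)\varepsilon_1)}$.
   Context: $\mu,\sigma:\mathbb{R}\to\mathbb{R}$ measurable, $(\varepsilon_t)$ i.i.d. Assumptions: (A1) $\varepsilon_1$ has a density w.r.t. Lebesgue measure, bounded and bounded away from $0$ on compacts; (A2) $\mu$ locally bounded, $\sigma$ positive, bounded away from $0$ on compacts, globally bounded; (A3) $\limsup_{|x|\to\infty}|x+\mu(x)|/|x|<1$; (A4) $\mathbb{E}e^{\kappa\varepsilon_1^2}<\infty$ for some $\kappa>0$ and $\mathbb{E}\varepsilon_1=0$. $P(x,A)=\mathbb{P}(x+\mu(x)+\sigma(x)\varepsilon_1\in A)$ is the transition kernel of the chain $X_t=X_{t-1}+\mu(X_{t-1})+\sigma(X_{t-1})\varepsilon_t$. *)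

theory Defs
  imports "HOL-Probability.Probability"
begin

definition Pexp :: "real measure \<Rightarrow> (real \<Rightarrow> real) \<Rightarrow> (real \<Rightarrow> real) \<Rightarrow> (real \<Rightarrow> real) \<Rightarrow> real \<Rightarrow> real" where
  "Pexp D mu sg V x = (\<integral>e. exp (V (x + mu x + sg x * e)) \<partial>D)"

end

theory Submission
  imports Defs
begin

lemma sq_split:
  fixes a b eta :: real assumes "eta > 0"
  shows "(a+b)^2 \<le> (1+eta)*a^2 + (1+1/eta)*b^2"
proof -
  have "eta * ((1+eta)*a^2 + (1+1/eta)*b^2 - (a+b)^2) = (eta*a - b)^2"
    using assms by (simp add: field_simps power2_eq_square)
  hence "eta * ((1+eta)*a^2 + (1+1/eta)*b^2 - (a+b)^2) \<ge> 0" by simp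
  thus ?thesis using assms by (simp add: zero_le_mult_iff)
qed

lemma key:
  fixes D :: "real measure"
  assumes P: "prob_space D" and S: "sets D = sets borel"
    and I: "integrable D (\<lambda>e. exp (\<kappa> * e\<^sup>2))"
    and k: "\<kappa> > 0" and eta: "eta > 0" and q: "q > 0" and s: "q*(1+1/eta)* sg^2 \<le> \<kappa>"
  shows "integrable D (\<lambda>e. exp (1 + q*(m + sg*e)^2)) \<and>
     ln (exp (- (1 + q * x\<^sup>2)) * (\<integral>e. exp (1 + q*(m + sg*e)^2) \<partial>D))
       \<le> q*(1+eta)*m^2 - q*x^2 + ln (\<integral>e. exp (\<kappa> * e\<^sup>2) \<partial>D)"
proof -
  interpret prob_space D by (rule P)
  let ?g = "\<lambda>e. exp (1 + q*(m + sg*e)^2)"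
  let ?h = "\<lambda>e. exp (1 + q*(1+eta)*m^2) * exp (\<kappa> * e\<^sup>2)"
  have gh: "?g e \<le> ?h e" for e
  proof -
    have "(m+sg*e)^2 \<le> (1+eta)*m^2 + (1+1/eta)*(sg*e)^2" by (rule sq_split[OF eta])
    have "q*(m+sg*e)^2 \<le> q*(1+eta)*m^2 + q*(1+1/eta)* sg^2*e^2"
    proof -
      have "q*(m+sg*e)^2 \<le> q*((1+eta)*m^2 + (1+1/eta)*(sg*e)^2)"
        using q \<open>(m+sg*e)^2 \<le> _\<close> by (intro mult_left_mono) auto
      thus ?thesis by (simp add: power_mult_distrib algebra_simps)
    qed
    also have "q*(1+1/eta)* sg^2*e^2 \<le> \<kappa> * e^2" using s by (simp add: mult_right_mono)
    finally show ?thesis by (simp add: exp_add[symmetric])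
  qed
  have mg: "?g \<in> borel_measurable D" 
    unfolding measurable_cong_sets[OF S refl] by measurable
  have Ih: "integrable D ?h" using I by simp
  have Ig: "integrable D ?g"
    by (rule Bochner_Integration.integrable_bound[OF Ih mg]) (use gh in \<open>auto intro!: AE_I2\<close>)
  have le: "(\<integral>e. ?g e \<partial>D) \<le> (\<integral>e. ?h e \<partial>D)" by (rule integral_mono[OF Ig Ih]) (use gh in auto)
  have ge1: "1 \<le> (\<integral>e. ?g e \<partial>D)"
  proof -
    have "(\<integral>e. 1 \<partial>D) \<le> (\<integral>e. ?g e \<partial>D)"
      by (rule integral_mono) (use q in \<open>auto intro: Ig\<close>)
    thus ?thesis by (simp add: prob_space)
  qed
  have C1: "1 \<le> (\<integral>e. exp (\<kappa> * e\<^sup>2) \<partial>D)"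
  proof -
    have "(\<integral>e. 1 \<partial>D) \<le> (\<integral>e. exp (\<kappa> * e\<^sup>2) \<partial>D)"
      by (rule integral_mono) (use I k in \<open>auto simp: zero_le_mult_iff\<close>)
    thus ?thesis by (simp add: prob_space)
  qed
  have "ln (exp (- (1 + q * x\<^sup>2)) * (\<integral>e. ?g e \<partial>D)) = - (1 + q * x\<^sup>2) + ln (\<integral>e. ?g e \<partial>D)"
    using ge1 by (simp add: ln_mult)
  also have "ln (\<integral>e. ?g e \<partial>D) \<le> ln (\<integral>e. ?h e \<partial>D)" using le ge1 by simp
  also have "(\<integral>e. ?h e \<partial>D) = exp (1 + q*(1+eta)*m^2) * (\<integral>e. exp (\<kappa> * e\<^sup>2) \<partial>D)" by simp
  also have "ln \<dots> = 1 + q*(1+eta)*m^2 + ln (\<integral>e. exp (\<kappa> * e\<^sup>2) \<partial>D)" using C1 by (simp add: ln_mult)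
  finally show ?thesis using Ig by simp
qed

theorem propositionp2p5:
  fixes mu sigma f :: "real \<Rightarrow> real" and D :: "real measure"
  assumes meas_mu: "mu \<in> borel_measurable borel"
    and meas_sigma: "sigma \<in> borel_measurable borel"
    (* (A1) eps_1 has law D with Lebesgue density f *)
    and f_meas: "f \<in> borel_measurable borel"
    and f_nonneg: "\<And>x. f x \<ge> 0"
    and D_def: "D = density lborel (\<lambda>x. ennreal (f x))"
    and D_prob: "prob_space D"
    and f_bdd: "\<And>S. compact S \<Longrightarrow> \<exists>M. \<forall>x\<in>S. f x \<le> M"
    and f_pos: "\<And>S. compact S \<Longrightarrow> \<exists>c>0. \<forall>x\<in>S. f x \<ge> c"
    (* (A2) *)
    and mu_locbdd: "\<And>S. compact S \<Longrightarrow> bounded (mu ` S)"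
    and sigma_pos: "\<And>x. sigma x > 0"
    and sigma_away: "\<And>S. compact S \<Longrightarrow> \<exists>c>0. \<forall>x\<in>S. sigma x \<ge> c"
    and sigma_bdd: "\<exists>M. \<forall>x. sigma x \<le> M"
    (* (A3) *)
    and A3: "Limsup at_infinity (\<lambda>x. ereal (\<bar>x + mu x\<bar> / \<bar>x\<bar>)) < 1"
    (* (A4) *)
    and A4_exp: "\<exists>\<kappa>>0. integrable D (\<lambda>e. exp (\<kappa> * e\<^sup>2))"
    and A4_mean: "integral\<^sup>L D (\<lambda>e. e) = 0"
  shows "\<exists>q>0. \<exists>K>0. \<exists>\<delta>>0. \<exists>b>0.
           (\<forall>x::real.
              integrable D (\<lambda>e. exp ((\<lambda>y. 1 + q * y\<^sup>2) (x + mu x + sigma x * e))) \<and>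
              ln (exp (- (1 + q * x\<^sup>2)) * Pexp D mu sigma (\<lambda>y. 1 + q * y\<^sup>2) x)
                \<le> - \<delta> * (1 + q * x\<^sup>2) + b * indicator {-K..K} x)"
  proof -
  have S: "sets D = sets borel" unfolding D_def by simp
  obtain M where M: "\<And>x. sigma x \<le> M" using sigma_bdd by auto
  have M0: "M > 0" using M[of 0] sigma_pos[of 0] by linarith
  obtain \<kappa> where k: "\<kappa> > 0" and I: "integrable D (\<lambda>e. exp (\<kappa> * e\<^sup>2))" using A4_exp by auto
  define L where "L = ln (\<integral>e. exp (\<kappa> * e\<^sup>2) \<partial>D)"
  obtain r where r1: "Limsup at_infinity (\<lambda>x. ereal (\<bar>x + mu x\<bar> / \<bar>x\<bar>)) < ereal r" and r2: "r < 1"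
    using ereal_dense2[OF A3] by auto
  have "eventually (\<lambda>x. ereal (\<bar>x + mu x\<bar> / \<bar>x\<bar>) < ereal r) at_infinity"
    by (rule Limsup_lessD[OF r1])
  then obtain b0 where b0: "\<And>x::real. b0 \<le> norm x \<Longrightarrow> \<bar>x + mu x\<bar> / \<bar>x\<bar> < r"
    unfolding eventually_at_infinity by auto
  define \<rho> where "\<rho> = max r (1/2)"
  have rho0: "\<rho> > 0" and rho1: "\<rho> < 1" using r2 by (auto simp: \<rho>_def)
  define R where "R = max b0 1"
  have R1: "R \<ge> 1" by (simp add: R_def)
  have big: "(x + mu x)^2 \<le> \<rho>^2 * x^2" if "\<bar>x\<bar> \<ge> R" for x
  proof -
    have xp: "\<bar>x\<bar> > 0" using that R1 by linarith
    have "\<bar>x + mu x\<bar> / \<bar>x\<bar> < r" using b0[of x] that by (simp add: R_def)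
    hence "\<bar>x + mu x\<bar> \<le> \<rho> * \<bar>x\<bar>" using xp by (simp add: divide_less_eq \<rho>_def) (smt (verit) mult_right_mono)
    hence "\<bar>x + mu x\<bar>^2 \<le> (\<rho> * \<bar>x\<bar>)^2" by (intro power_mono) auto
    thus ?thesis by (simp add: power_mult_distrib)
  qed
  define \<eta> where "\<eta> = (1 - \<rho>^2) / (2*\<rho>^2)"
  have rho2: "\<rho>^2 < 1" using rho0 rho1 by (simp add: power_less_one_iff abs_less_iff)
  have eta0: "\<eta> > 0" unfolding \<eta>_def using rho0 rho2 by simp
  have etarho: "(1+\<eta>)*\<rho>^2 = (1+\<rho>^2)/2" unfolding \<eta>_def using rho0 by (simp add: field_simps)
  define q where "q = \<kappa> / ((1+1/\<eta>)*M^2)"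
  have q0: "q > 0" unfolding q_def using k eta0 M0 by (intro divide_pos_pos mult_pos_pos) (auto simp: add_pos_pos)
  have qs: "q*(1+1/\<eta>)* (sigma x)^2 \<le> \<kappa>" for x
  proof -
    have "(sigma x)^2 \<le> M^2" using M[of x] sigma_pos[of x] by (intro power_mono) (auto simp: less_imp_le)
    hence "q*(1+1/\<eta>)* (sigma x)^2 \<le> q*(1+1/\<eta>)*M^2" using q0 eta0 by (intro mult_left_mono) auto
    also have "\<dots> = \<kappa>" unfolding q_def
    proof -
      have "(1+1/\<eta>)*M^2 > 0" using eta0 M0 by (auto intro!: mult_pos_pos add_pos_pos)
      thus "\<kappa> / ((1 + 1 / \<eta>) * M\<^sup>2) * (1 + 1 / \<eta>) * M\<^sup>2 = \<kappa>" by (simp add: field_simps)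
    qed
    finally show ?thesis .
  qed
  define \<delta> where "\<delta> = (1 - \<rho>^2)/4"
  have d0: "\<delta> > 0" unfolding \<delta>_def using rho2 by simp
  define K where "K = R + (\<bar>L\<bar> + \<delta>)/(q*\<delta>) + 1"
  have K1: "K \<ge> 1" and KR: "K \<ge> R" and KL: "K \<ge> (\<bar>L\<bar> + \<delta>)/(q*\<delta>)"
    unfolding K_def using R1 q0 d0 by (auto simp: zero_le_divide_iff)
  have "bounded (mu ` {-K..K})" by (rule mu_locbdd) simp
  then obtain B where B: "\<And>x. x \<in> {-K..K} \<Longrightarrow> \<bar>mu x\<bar> \<le> B" unfolding bounded_iff by (auto simp del: atLeastAtMost_iff)
  define b where "b = q*(1+\<eta>)*(K+B)^2 + \<bar>L\<bar> + \<delta>*(1+q*K^2) + 1"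
  have b0': "b > 0" unfolding b_def
  proof -
    have "q*(1+\<eta>)*(K+B)^2 \<ge> 0" using q0 eta0 by simp
    moreover have "\<delta>*(1+q*K^2) \<ge> 0" using q0 d0 by simp
    ultimately show "0 < q * (1 + \<eta>) * (K + B)\<^sup>2 + \<bar>L\<bar> + \<delta> * (1 + q * K\<^sup>2) + 1" by linarith
  qed
  have K0: "K > 0" using K1 by simp
  have ALL: "integrable D (\<lambda>e. exp ((\<lambda>y. 1 + q * y\<^sup>2) (x + mu x + sigma x * e))) \<and>
              ln (exp (- (1 + q * x\<^sup>2)) * Pexp D mu sigma (\<lambda>y. 1 + q * y\<^sup>2) x)
                \<le> - \<delta> * (1 + q * x\<^sup>2) + b * indicator {-K..K} x" for x
  proof (intro conjI)
    have kk: "integrable D (\<lambda>e. exp (1 + q*((x + mu x) + sigma x*e)^2)) \<and>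
     ln (exp (- (1 + q * x\<^sup>2)) * (\<integral>e. exp (1 + q*((x + mu x) + sigma x*e)^2) \<partial>D))
       \<le> q*(1+\<eta>)*(x + mu x)^2 - q*x^2 + L"
      unfolding L_def by (rule key[OF D_prob S I k eta0 q0 qs])
    show "integrable D (\<lambda>e. exp ((\<lambda>y. 1 + q * y\<^sup>2) (x + mu x + sigma x * e)))"
      using kk by simp
    have lnb: "ln (exp (- (1 + q * x\<^sup>2)) * Pexp D mu sigma (\<lambda>y. 1 + q * y\<^sup>2) x)
       \<le> q*(1+\<eta>)*(x + mu x)^2 - q*x^2 + L" using kk by (simp add: Pexp_def)
    show "ln (exp (- (1 + q * x\<^sup>2)) * Pexp D mu sigma (\<lambda>y. 1 + q * y\<^sup>2) x)
                \<le> - \<delta> * (1 + q * x\<^sup>2) + b * indicator {-K..K} x"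
    proof (cases "x \<in> {-K..K}")
      case True
      have ax: "\<bar>x\<bar> \<le> K" using True by auto
      have "\<bar>x + mu x\<bar> \<le> K + B" using ax B[OF True] by linarith
      hence m2: "(x + mu x)^2 \<le> (K+B)^2" by (metis abs_ge_zero power2_abs power_mono)
      have x2: "x^2 \<le> K^2" using ax by (metis abs_ge_zero power2_abs power_mono)
      have "q*(1+\<eta>)*(x + mu x)^2 \<le> q*(1+\<eta>)*(K+B)^2" using m2 q0 eta0 by (intro mult_left_mono) auto
      moreover have "q*x^2 \<ge> 0" using q0 by simp
      moreover have "\<delta>*(q*x^2) \<le> \<delta>*(q*K^2)" using x2 q0 d0 by (intro mult_left_mono) auto
      ultimately show ?thesis using lnb True unfolding b_def by (simp add: algebra_simps)
    next
      case False
      have ax: "\<bar>x\<bar> \<ge> K" using False by auto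
      have "q*(1+\<eta>)*(x + mu x)^2 \<le> q*(1+\<eta>)*(\<rho>^2*x^2)" using big[of x] ax KR q0 eta0
        by (intro mult_left_mono) auto
      also have "\<dots> = q*((1+\<eta>)*\<rho>^2)*x^2" by (simp only: mult.assoc mult.left_commute)
      also have "\<dots> = q*((1+\<rho>^2)/2)*x^2" by (simp only: etarho)
      finally have h1: "q*(1+\<eta>)*(x + mu x)^2 \<le> q*((1+\<rho>^2)/2)*x^2" .
      have x2: "x^2 \<ge> K"
      proof -
        have "K*1 \<le> \<bar>x\<bar>*\<bar>x\<bar>" using ax K1 by (intro mult_mono) auto
        thus ?thesis by (simp add: power2_eq_square)
      qed
      have "(\<bar>L\<bar> + \<delta>) \<le> (q*\<delta>) * x^2"
      proof -
        have "(\<bar>L\<bar> + \<delta>)/(q*\<delta>) \<le> x^2" using KL x2 by linarith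
        thus ?thesis using q0 d0 by (simp add: divide_le_eq mult.commute)
      qed
      hence hd: "\<bar>L\<bar> + \<delta> \<le> \<delta>*(q*x^2)" by (simp add: algebra_simps)
      have e1: "q*((1+\<rho>^2)/2)*x^2 = (q*x^2)/2 + (\<rho>^2*(q*x^2))/2" by (simp add: algebra_simps)
      have e2: "\<delta>*(q*x^2) = (q*x^2)/4 - (\<rho>^2*(q*x^2))/4" unfolding \<delta>_def by (simp add: field_simps)
      have e3: "- \<delta> * (1 + q * x\<^sup>2) + b * indicator {-K..K} x = - \<delta> - \<delta>*(q*x^2)"
        using False by (simp add: algebra_simps)
      show ?thesis unfolding e3 using lnb h1 hd e1 e2 abs_ge_self[of L] by linarith
    qed
  qed
  show ?thesis using q0 K0 d0 b0' ALL by blast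
qed

end
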